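(* Let $\mathbb{V}$ and $\mathbb{V}'$ be varieties with the same signature $\mathcal{F}$ and defining sets of identities $\Sigma\subseteq\Sigma'$ respectively, and suppose $\mathbb{V}$ is BIT speciale. Let $A'$ be a $\mathbb{V}'$-algebra. A subset $H\subseteq A'$ is an ideal of $A'$ in the variety $\mathbb{V}'$ if and only if it is an ideal of $A'$ in the variety $\mathbb{V}$.
   Context: BIT speciale: the algebraic theory of $\mathbb{V}$ contains a constant $0$ and, for some $n\ge1$, binary terms $\alpha_1,\dots,\alpha_n$ and an $(n+1)$-ary term $\theta$ such that $\alpha_i(x,x)=0$ and $\theta(\alpha_1(x,y),\dots,\alpha_n(x,y),y)=x$ are identities of $\mathbb{V}$. For a variety $\mathbb{W}$ with signature $\mathcal{F}$: an ideal term of $\mathbb{W}$ in the variables $y_1,\dots,y_p$ is a term $t(x_1,\dots,x_m,y_1,\dots,y_p)$ over $\mathcal{F}$ such that $t(x_1,\dots,x_m,0,\dots,0)=0$ is an identity of $\mathbb{W}$; a non-empty subset $H$ of a $\mathbb{W}$-algebra $A$ is an ideal of $A$ in $\mathbb{W}$ if $t(a_1,\dots,a_m,b_1,\dots,b_p)\in H$ for every ideal term $t$ of $\mathbb{W}$, all $a_r\in A$ and all $b_s\in H$. A $\mathbb{V}'$-algebra is in particular a $\mathbb{V}$-algebra. *)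

theory Defs
  imports Main
begin

datatype 'f trm = Var nat | Op 'f "'f trm list"

fun wf_trm :: "('f \<Rightarrow> nat) \<Rightarrow> 'f trm \<Rightarrow> bool" where
  "wf_trm ar (Var v) = True"
| "wf_trm ar (Op f ts) = (length ts = ar f \<and> (\<forall>t\<in>set ts. wf_trm ar t))"

fun vars :: "'f trm \<Rightarrow> nat set" where
  "vars (Var v) = {v}"
| "vars (Op f ts) = (\<Union>t\<in>set ts. vars t)"

fun subst :: "(nat \<Rightarrow> 'f trm) \<Rightarrow> 'f trm \<Rightarrow> 'f trm" where
  "subst \<sigma> (Var v) = \<sigma> v"
| "subst \<sigma> (Op f ts) = Op f (map (subst \<sigma>) ts)"

fun eval :: "('f \<Rightarrow> 'a list \<Rightarrow> 'a) \<Rightarrow> (nat \<Rightarrow> 'a) \<Rightarrow> 'f trm \<Rightarrow> 'a" where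
  "eval I \<rho> (Var v) = \<rho> v"
| "eval I \<rho> (Op f ts) = I f (map (eval I \<rho>) ts)"

definition wf_ids :: "('f \<Rightarrow> nat) \<Rightarrow> ('f trm \<times> 'f trm) set \<Rightarrow> bool" where
  "wf_ids ar \<Sigma> \<longleftrightarrow> (\<forall>(s, t)\<in>\<Sigma>. wf_trm ar s \<and> wf_trm ar t)"

text \<open>Identities of the variety defined by \<Sigma>: equational consequences of \<Sigma>
  (Birkhoff's equational logic; by completeness exactly the identities true in all
  algebras of the variety).\<close>
inductive deriv :: "('f \<Rightarrow> nat) \<Rightarrow> ('f trm \<times> 'f trm) set \<Rightarrow> 'f trm \<Rightarrow> 'f trm \<Rightarrow> bool"
  for ar \<Sigma> where
  ax: "(s, t) \<in> \<Sigma> \<Longrightarrow> (\<forall>v. wf_trm ar (\<sigma> v)) \<Longrightarrow> deriv ar \<Sigma> (subst \<sigma> s) (subst \<sigma> t)"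
| refl: "wf_trm ar t \<Longrightarrow> deriv ar \<Sigma> t t"
| sym: "deriv ar \<Sigma> s t \<Longrightarrow> deriv ar \<Sigma> t s"
| trans: "deriv ar \<Sigma> s t \<Longrightarrow> deriv ar \<Sigma> t u \<Longrightarrow> deriv ar \<Sigma> s u"
| cong: "length ss = ar f \<Longrightarrow> length ts = ar f \<Longrightarrow>
         (\<forall>i<ar f. deriv ar \<Sigma> (ss ! i) (ts ! i)) \<Longrightarrow> deriv ar \<Sigma> (Op f ss) (Op f ts)"

definition algebra :: "('f \<Rightarrow> nat) \<Rightarrow> 'a set \<Rightarrow> ('f \<Rightarrow> 'a list \<Rightarrow> 'a) \<Rightarrow> bool" where
  "algebra ar A I \<longleftrightarrow> (\<forall>f xs. length xs = ar f \<longrightarrow> set xs \<subseteq> A \<longrightarrow> I f xs \<in> A)"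

definition in_variety :: "('f \<Rightarrow> nat) \<Rightarrow> ('f trm \<times> 'f trm) set \<Rightarrow> 'a set \<Rightarrow> ('f \<Rightarrow> 'a list \<Rightarrow> 'a) \<Rightarrow> bool" where
  "in_variety ar \<Sigma> A I \<longleftrightarrow> algebra ar A I \<and>
     (\<forall>(s, t)\<in>\<Sigma>. \<forall>\<rho>. range \<rho> \<subseteq> A \<longrightarrow> eval I \<rho> s = eval I \<rho> t)"

text \<open>BIT speciale with constant z (a closed term). x = Var 0, y = Var 1;
  \<theta> has variables among 0..n, where variable i<n receives \<alpha>_(i+1)(x,y) and n receives y.\<close>
definition bit_speciale :: "('f \<Rightarrow> nat) \<Rightarrow> ('f trm \<times> 'f trm) set \<Rightarrow> 'f trm \<Rightarrow> bool" where
  "bit_speciale ar \<Sigma> z \<longleftrightarrow> wf_trm ar z \<and> vars z = {} \<and>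
     (\<exists>n \<alpha>s \<theta>. n \<ge> 1 \<and> length \<alpha>s = n \<and>
        (\<forall>\<alpha>\<in>set \<alpha>s. wf_trm ar \<alpha> \<and> vars \<alpha> \<subseteq> {0, 1}) \<and>
        wf_trm ar \<theta> \<and> vars \<theta> \<subseteq> {0..n} \<and>
        (\<forall>\<alpha>\<in>set \<alpha>s. deriv ar \<Sigma> (subst (\<lambda>v. Var 0) \<alpha>) z) \<and>
        deriv ar \<Sigma> (subst (\<lambda>v. if v < n then \<alpha>s ! v else Var 1) \<theta>) (Var 0))"

text \<open>Ideal terms of the variety defined by \<Sigma> (w.r.t. the constant z) in the
  variables Y (the y's); all other variables are the x's.\<close>
definition ideal_term :: "('f \<Rightarrow> nat) \<Rightarrow> ('f trm \<times> 'f trm) set \<Rightarrow> 'f trm \<Rightarrow> nat set \<Rightarrow> 'f trm \<Rightarrow> bool" where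
  "ideal_term ar \<Sigma> z Y t \<longleftrightarrow> wf_trm ar t \<and> finite Y \<and>
     deriv ar \<Sigma> (subst (\<lambda>v. if v \<in> Y then z else Var v) t) z"

definition is_ideal :: "('f \<Rightarrow> nat) \<Rightarrow> ('f trm \<times> 'f trm) set \<Rightarrow> 'f trm \<Rightarrow> 'a set \<Rightarrow> ('f \<Rightarrow> 'a list \<Rightarrow> 'a) \<Rightarrow> 'a set \<Rightarrow> bool" where
  "is_ideal ar \<Sigma> z A I H \<longleftrightarrow> H \<noteq> {} \<and> H \<subseteq> A \<and>
     (\<forall>Y t \<rho>. ideal_term ar \<Sigma> z Y t \<longrightarrow> (\<forall>v. \<rho> v \<in> A) \<longrightarrow> (\<forall>v\<in>Y. \<rho> v \<in> H) \<longrightarrow>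
        eval I \<rho> t \<in> H)"

end

theory Submission
  imports Defs
begin

lemma deriv_mono: "deriv ar S s t \<Longrightarrow> S \<subseteq> S' \<Longrightarrow> deriv ar S' s t"
proof (induction rule: deriv.induct)
  case (ax s t \<sigma>) then show ?case by (auto intro: deriv.ax)
next
  case (refl t) then show ?case by (auto intro: deriv.refl)
next
  case (sym s t) then show ?case by (auto intro: deriv.sym)
next
  case (trans s t u) then show ?case by (auto intro: deriv.trans)
next
  case (cong ss f ts) then show ?case by (auto intro: deriv.cong)
qed

lemma eval_subst: "eval I \<rho> (subst \<sigma> t) = eval I (\<lambda>v. eval I \<rho> (\<sigma> v)) t"
  by (induction t) (simp_all cong: map_cong)

lemma subst_subst: "subst \<tau> (subst \<sigma> t) = subst (\<lambda>v. subst \<tau> (\<sigma> v)) t"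
  by (induction t) auto

lemma subst_cong_vars: "(\<And>v. v \<in> vars t \<Longrightarrow> \<sigma>1 v = \<sigma>2 v) \<Longrightarrow> subst \<sigma>1 t = subst \<sigma>2 t"
  by (induction t) auto

lemma subst_closed: "vars t = {} \<Longrightarrow> subst \<sigma> t = t"
proof -
  assume "vars t = {}"
  then have "subst \<sigma> t = subst Var t" by (intro subst_cong_vars) auto
  also have "subst Var t = t" by (induction t) (auto simp: map_idI)
  finally show ?thesis .
qed

lemma wf_subst: "wf_trm ar t \<Longrightarrow> (\<forall>v. wf_trm ar (\<sigma> v)) \<Longrightarrow> wf_trm ar (subst \<sigma> t)"
  by (induction t) auto

lemma eval_in: "algebra ar A I \<Longrightarrow> wf_trm ar t \<Longrightarrow> (\<forall>v. \<rho> v \<in> A) \<Longrightarrow> eval I \<rho> t \<in> A"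
proof (induction t)
  case (Var x) then show ?case by simp
next
  case (Op f ts)
  have "set (map (eval I \<rho>) ts) \<subseteq> A" using Op by auto
  then show ?case using Op unfolding algebra_def by auto
qed

lemma deriv_subst: "deriv ar S s t \<Longrightarrow> (\<forall>v. wf_trm ar (\<sigma> v)) \<Longrightarrow> deriv ar S (subst \<sigma> s) (subst \<sigma> t)"
proof (induction rule: deriv.induct)
  case (ax s t \<tau>)
  have "deriv ar S (subst (\<lambda>v. subst \<sigma> (\<tau> v)) s) (subst (\<lambda>v. subst \<sigma> (\<tau> v)) t)"
    using ax by (intro deriv.ax) (auto intro: wf_subst)
  then show ?case by (simp add: subst_subst)
next
  case (refl t) then show ?case by (auto intro: deriv.refl wf_subst)
next
  case (sym s t) then show ?case by (auto intro: deriv.sym)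
next
  case (trans s t u) then show ?case by (auto intro: deriv.trans)
next
  case (cong ss f ts)
  have "deriv ar S (Op f (map (subst \<sigma>) ss)) (Op f (map (subst \<sigma>) ts))"
    using cong by (intro deriv.cong) auto
  then show ?case by simp
qed

lemma deriv_subst_cong: "wf_trm ar t \<Longrightarrow> (\<forall>v. deriv ar S (\<sigma>1 v) (\<sigma>2 v)) \<Longrightarrow> deriv ar S (subst \<sigma>1 t) (subst \<sigma>2 t)"
proof (induction t)
  case (Var x) then show ?case by simp
next
  case (Op f ts)
  then show ?case by (auto intro!: deriv.cong)
qed

lemma sound: assumes "deriv ar S s t" "in_variety ar S A I" "\<forall>v. \<rho> v \<in> A" shows "eval I \<rho> s = eval I \<rho> t"
using assms proof (induction arbitrary: \<rho> rule: deriv.induct)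
  case (ax s t \<sigma>)
  have "\<forall>v. eval I \<rho> (\<sigma> v) \<in> A"
    using ax eval_in[of ar A I] unfolding in_variety_def by blast
  then have "range (\<lambda>v. eval I \<rho> (\<sigma> v)) \<subseteq> A" by auto
  then show ?case using ax unfolding in_variety_def by (auto simp: eval_subst)
next
  case (refl t) then show ?case by simp
next
  case (sym s t) then show ?case by simp
next
  case (trans s t u) then show ?case by simp
next
  case (cong ss f ts)
  have "map (eval I \<rho>) ss = map (eval I \<rho>) ts"
    using cong by (intro nth_equalityI) auto
  then show ?case by simp
qed

lemma idealD: "is_ideal ar S z A I H \<Longrightarrow> ideal_term ar S z Y t \<Longrightarrow> \<forall>v. \<rho> v \<in> A \<Longrightarrow>
  \<forall>v\<in>Y. \<rho> v \<in> H \<Longrightarrow> eval I \<rho> t \<in> H"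
  unfolding is_ideal_def by blast

theorem corollary2p8:
  fixes ar :: "'f \<Rightarrow> nat"
    and \<Sigma> \<Sigma>' :: "('f trm \<times> 'f trm) set"
    and z :: "'f trm"
    and A :: "'a set" and I :: "'f \<Rightarrow> 'a list \<Rightarrow> 'a" and H :: "'a set"
  assumes "wf_ids ar \<Sigma>'"
    and "\<Sigma> \<subseteq> \<Sigma>'"
    and "bit_speciale ar \<Sigma> z"
    and "in_variety ar \<Sigma>' A I"
    and "H \<subseteq> A"
  shows "is_ideal ar \<Sigma>' z A I H \<longleftrightarrow> is_ideal ar \<Sigma> z A I H"
proof
  assume "is_ideal ar \<Sigma>' z A I H"
  moreover have "ideal_term ar \<Sigma>' z Y t" if "ideal_term ar \<Sigma> z Y t" for Y t
    using that deriv_mono[OF _ assms(2)] unfolding ideal_term_def by blast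
  ultimately show "is_ideal ar \<Sigma> z A I H"
    unfolding is_ideal_def by blast
next
  assume id: "is_ideal ar \<Sigma> z A I H"
  have alg: "algebra ar A I" using assms(4) unfolding in_variety_def by blast
  obtain n \<alpha>s \<theta> where zwf: "wf_trm ar z" and zc: "vars z = {}" and
    n1: "n \<ge> 1" and len: "length \<alpha>s = n" and
    awf: "\<forall>\<alpha>\<in>set \<alpha>s. wf_trm ar \<alpha> \<and> vars \<alpha> \<subseteq> {0, 1}" and
    twf: "wf_trm ar \<theta>" and tv: "vars \<theta> \<subseteq> {0..n}" and
    ad: "\<forall>\<alpha>\<in>set \<alpha>s. deriv ar \<Sigma> (subst (\<lambda>v. Var 0) \<alpha>) z" and
    td: "deriv ar \<Sigma> (subst (\<lambda>v. if v < n then \<alpha>s ! v else Var 1) \<theta>) (Var 0)"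
    using assms(3) unfolding bit_speciale_def by blast
  have sound\<Sigma>: "eval I \<rho> s = eval I \<rho> t" if "deriv ar \<Sigma> s t" "\<forall>v. \<rho> v \<in> A" for s t \<rho>
    using sound[OF deriv_mono[OF that(1) assms(2)] assms(4) that(2)] .
  have Hne: "H \<noteq> {}" and HA: "H \<subseteq> A" using id unfolding is_ideal_def by auto
  have zit: "ideal_term ar \<Sigma> z {} z"
    unfolding ideal_term_def using zwf by (auto intro: deriv.refl simp: subst_closed[OF zc])
  have zH: "eval I \<rho> z \<in> H" if "\<forall>v. \<rho> v \<in> A" for \<rho>
    using idealD[OF id zit that] by simp
  have thit: "ideal_term ar \<Sigma> z {0..n} \<theta>"
  proof -
    have e1: "subst (\<lambda>v. if v \<in> {0..n} then z else Var v) \<theta> = subst (\<lambda>v. z) \<theta>"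
      using tv by (intro subst_cong_vars) auto
    have "deriv ar \<Sigma> (subst (\<lambda>v. z) (subst (\<lambda>v. if v < n then \<alpha>s ! v else Var 1) \<theta>)) (subst (\<lambda>v. z) (Var 0))"
      using td zwf by (intro deriv_subst) auto
    then have d1: "deriv ar \<Sigma> (subst (\<lambda>v. if v < n then subst (\<lambda>v. z) (\<alpha>s ! v) else z) \<theta>) z"
      by (simp add: subst_subst if_distrib cong: if_cong)
    have "\<forall>v. deriv ar \<Sigma> (if v < n then subst (\<lambda>v. z) (\<alpha>s ! v) else z) z"
    proof
      fix v
      show "deriv ar \<Sigma> (if v < n then subst (\<lambda>v. z) (\<alpha>s ! v) else z) z"
      proof (cases "v < n")
        case True
        then have m: "\<alpha>s ! v \<in> set \<alpha>s" using len by auto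
        have "deriv ar \<Sigma> (subst (\<lambda>w. z) (subst (\<lambda>v. Var 0) (\<alpha>s ! v))) (subst (\<lambda>w. z) z)"
          using ad m zwf by (intro deriv_subst) auto
        then show ?thesis using True by (simp add: subst_subst subst_closed[OF zc])
      next
        case False then show ?thesis using zwf by (auto intro: deriv.refl)
      qed
    qed
    then have "deriv ar \<Sigma> (subst (\<lambda>v. if v < n then subst (\<lambda>v. z) (\<alpha>s ! v) else z) \<theta>) (subst (\<lambda>v. z) \<theta>)"
      using twf by (intro deriv_subst_cong) auto
    then have "deriv ar \<Sigma> (subst (\<lambda>v. z) \<theta>) z" using d1 by (blast intro: deriv.sym deriv.trans)
    then show ?thesis unfolding ideal_term_def using twf e1 by simp
  qed
  show "is_ideal ar \<Sigma>' z A I H"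
    unfolding is_ideal_def
  proof (intro conjI allI impI)
    show "H \<noteq> {}" "H \<subseteq> A" by fact+
    fix Y t \<rho>
    assume it: "ideal_term ar \<Sigma>' z Y t" and \<rho>A: "\<forall>v. \<rho> v \<in> A" and \<rho>H: "\<forall>v\<in>Y. \<rho> v \<in> H"
    define \<tau> where "\<tau> = (\<lambda>v. if v \<in> Y then z else Var v)"
    define t0 where "t0 = subst \<tau> t"
    have wft: "wf_trm ar t" and finY: "finite Y" and dt0: "deriv ar \<Sigma>' t0 z"
      using it unfolding ideal_term_def t0_def \<tau>_def by auto
    have \<tau>wf: "\<forall>v. wf_trm ar (\<tau> v)" using zwf unfolding \<tau>_def by auto
    have wft0: "wf_trm ar t0" unfolding t0_def using wft \<tau>wf by (rule wf_subst)
    have et0: "eval I \<rho> t0 = eval I \<rho> z" using sound[OF dt0 assms(4) \<rho>A] .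
    have \<tau>\<tau>: "subst \<tau> t0 = t0"
    proof -
      have "(\<lambda>v. subst \<tau> (\<tau> v)) = \<tau>" unfolding \<tau>_def by (auto simp: subst_closed[OF zc])
      then show ?thesis unfolding t0_def by (simp add: subst_subst)
    qed
    define s where "s = (\<lambda>\<alpha>. subst (\<lambda>w. if w = 0 then t else t0) \<alpha>)"
    define \<rho>3 where "\<rho>3 = (\<lambda>w::nat. if w = 0 then eval I \<rho> t else eval I \<rho> z)"
    have \<rho>3A: "\<forall>v. \<rho>3 v \<in> A" unfolding \<rho>3_def using eval_in[OF alg wft \<rho>A] eval_in[OF alg zwf \<rho>A] by auto
    have sH: "eval I \<rho>3 \<alpha> \<in> H" if m: "\<alpha> \<in> set \<alpha>s" for \<alpha>
    proof -
      have awf': "wf_trm ar \<alpha>" using awf m by auto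
      have fe: "(\<lambda>w. subst \<tau> (if w = 0 then t else t0)) = (\<lambda>w. t0)"
        using \<tau>\<tau> by (auto simp: t0_def)
      have "subst \<tau> (s \<alpha>) = subst (\<lambda>w. t0) \<alpha>"
        unfolding s_def subst_subst fe ..
      also have "\<dots> = subst (\<lambda>w. t0) (subst (\<lambda>v. Var 0) \<alpha>)" by (simp add: subst_subst)
      finally have eq: "subst \<tau> (s \<alpha>) = subst (\<lambda>w. t0) (subst (\<lambda>v. Var 0) \<alpha>)" .
      have "deriv ar \<Sigma> (subst (\<lambda>w. t0) (subst (\<lambda>v. Var 0) \<alpha>)) (subst (\<lambda>w. t0) z)"
        using ad m wft0 by (intro deriv_subst) auto
      then have "deriv ar \<Sigma> (subst \<tau> (s \<alpha>)) z" using eq by (simp add: subst_closed[OF zc])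
      moreover have "wf_trm ar (s \<alpha>)" unfolding s_def using awf' wft wft0 by (intro wf_subst) auto
      ultimately have "ideal_term ar \<Sigma> z Y (s \<alpha>)" unfolding ideal_term_def \<tau>_def using finY by simp
      then have "eval I \<rho> (s \<alpha>) \<in> H" using idealD[OF id _ \<rho>A \<rho>H] by blast
      moreover have "eval I \<rho> (s \<alpha>) = eval I \<rho>3 \<alpha>"
        unfolding s_def \<rho>3_def eval_subst by (rule arg_cong[where f="\<lambda>r. eval I r \<alpha>"]) (auto simp: et0)
      ultimately show ?thesis by simp
    qed
    define \<rho>2 where "\<rho>2 = (\<lambda>v. if v < n then eval I \<rho>3 (\<alpha>s ! v) else eval I \<rho> z)"
    have "eval I \<rho> t = eval I \<rho>3 (Var 0)" unfolding \<rho>3_def by simp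
    also have "\<dots> = eval I \<rho>3 (subst (\<lambda>v. if v < n then \<alpha>s ! v else Var 1) \<theta>)"
      using sound\<Sigma>[OF td \<rho>3A] by simp
    also have "\<dots> = eval I \<rho>2 \<theta>"
      unfolding eval_subst \<rho>2_def by (rule arg_cong[where f="\<lambda>r. eval I r \<theta>"]) (auto simp: \<rho>3_def)
    finally have e: "eval I \<rho> t = eval I \<rho>2 \<theta>" .
    have \<rho>2A: "\<forall>v. \<rho>2 v \<in> A"
    proof
      fix v
      show "\<rho>2 v \<in> A"
      proof (cases "v < n")
        case True
        then have "\<alpha>s ! v \<in> set \<alpha>s" using len by auto
        then show ?thesis using True sH HA unfolding \<rho>2_def by auto
      next
        case False then show ?thesis unfolding \<rho>2_def using eval_in[OF alg zwf \<rho>A] by auto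
      qed
    qed
    have \<rho>2H: "\<forall>v\<in>{0..n}. \<rho>2 v \<in> H"
    proof
      fix v
      show "\<rho>2 v \<in> H"
      proof (cases "v < n")
        case True
        then have "\<alpha>s ! v \<in> set \<alpha>s" using len by auto
        then show ?thesis using True sH unfolding \<rho>2_def by auto
      next
        case False then show ?thesis unfolding \<rho>2_def using zH[OF \<rho>A] by auto
      qed
    qed
    show "eval I \<rho> t \<in> H" using idealD[OF id thit \<rho>2A \<rho>2H] e by simp
  qed
qed

end
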